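(* Let $T$ be a tree of order $n$ with $\operatorname{diam}(T)\geq 4$, and let $T_1$ be a tree obtained from $T$ by a proper generalized tree shift. Then $\lambda_1(\overline{T_1})> \lambda_1(\overline{T})$, where $\lambda_1(G)$ denotes the distance spectral radius of $G$ and $\overline{G}$ denotes the complement of $G$.
   Context: For a connected graph $G$, the distance matrix $D(G)$ has $(v_i,v_j)$-entry equal to the length of a shortest path between $v_i$ and $v_j$ in $G$; its largest eigenvalue is the distance spectral radius $\lambda_1(G)$. The complement $\overline{G}$ has the same vertex set as $G$, with two distinct vertices adjacent iff they are non-adjacent in $G$. Generalized tree shift (GTS): let $T$ be a tree and $u,v\in V(T)$ such that all interior vertices of the path $uPv$ from $u$ to $v$ in $T$ (if any) have degree $2$. Let $w$ be the neighbor of $v$ on the path $uPv$ (possibly $w=u$). The tree $T_1$ is obtained from $T$ by deleting all edges between $v$ and $N_T(v)\setminus\{w\}$ and adding all edges between $u$ and $N_T(v)\setminus\{w\}$ (here $N_T(v)$ is the set of neighbours of $v$ in $T$). The GTS is called proper if neither $u$ nor $v$ is a pendant vertex (degree-one vertex) of $T$; in that case $T_1$ has one more pendant vertex than $T$. *)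

theory Defs
  imports "Jordan_Normal_Form.Char_Poly"
begin

definition graph :: "nat \<Rightarrow> nat set set \<Rightarrow> bool" where
  "graph n E \<longleftrightarrow> (\<forall>e\<in>E. \<exists>x y. e = {x, y} \<and> x \<noteq> y \<and> x < n \<and> y < n)"

definition nbrs :: "nat set set \<Rightarrow> nat \<Rightarrow> nat set" where
  "nbrs E x = {y. {x, y} \<in> E}"

definition deg :: "nat set set \<Rightarrow> nat \<Rightarrow> nat" where
  "deg E x = card (nbrs E x)"

definition pendant :: "nat set set \<Rightarrow> nat \<Rightarrow> bool" where
  "pendant E x \<longleftrightarrow> deg E x = 1"

definition walk :: "nat set set \<Rightarrow> nat list \<Rightarrow> bool" where
  "walk E xs \<longleftrightarrow> xs \<noteq> [] \<and> (\<forall>i. Suc i < length xs \<longrightarrow> {xs ! i, xs ! Suc i} \<in> E)"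

definition path :: "nat set set \<Rightarrow> nat list \<Rightarrow> bool" where
  "path E xs \<longleftrightarrow> walk E xs \<and> distinct xs"

definition connected :: "nat \<Rightarrow> nat set set \<Rightarrow> bool" where
  "connected n E \<longleftrightarrow> (\<forall>x<n. \<forall>y<n. \<exists>xs. walk E xs \<and> hd xs = x \<and> last xs = y)"

(* a cycle: closed walk x0 x1 ... x(k-1) x0 with k >= 3 distinct vertices *)
definition has_cycle :: "nat set set \<Rightarrow> bool" where
  "has_cycle E \<longleftrightarrow> (\<exists>xs. walk E xs \<and> length xs \<ge> 4 \<and> hd xs = last xs \<and> distinct (tl xs))"

definition is_tree :: "nat \<Rightarrow> nat set set \<Rightarrow> bool" where
  "is_tree n E \<longleftrightarrow> graph n E \<and> connected n E \<and> \<not> has_cycle E"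

definition gdist :: "nat set set \<Rightarrow> nat \<Rightarrow> nat \<Rightarrow> nat" where
  "gdist E x y = (LEAST k. \<exists>xs. walk E xs \<and> hd xs = x \<and> last xs = y \<and> length xs = Suc k)"

definition diam :: "nat \<Rightarrow> nat set set \<Rightarrow> nat" where
  "diam n E = Max {gdist E x y | x y. x < n \<and> y < n}"

definition complement :: "nat \<Rightarrow> nat set set \<Rightarrow> nat set set" where
  "complement n E = {{x, y} | x y. x < n \<and> y < n \<and> x \<noteq> y \<and> {x, y} \<notin> E}"

definition distance_matrix :: "nat \<Rightarrow> nat set set \<Rightarrow> real mat" where
  "distance_matrix n E = mat n n (\<lambda>(i, j). real (gdist E i j))"

definition dist_spectral_radius :: "nat \<Rightarrow> nat set set \<Rightarrow> real" where
  "dist_spectral_radius n E = Max {k. eigenvalue (distance_matrix n E) k}"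

definition gts :: "nat \<Rightarrow> nat set set \<Rightarrow> nat \<Rightarrow> nat \<Rightarrow> nat set set \<Rightarrow> bool" where
  "gts n E u v E1 \<longleftrightarrow> u < n \<and> v < n \<and> u \<noteq> v \<and>
     (\<exists>p. path E p \<and> hd p = u \<and> last p = v \<and>
        (\<forall>i. 0 < i \<and> i < length p - 1 \<longrightarrow> deg E (p ! i) = 2) \<and>
        (let w = p ! (length p - 2); S = nbrs E v - {w} in
           E1 = (E - {{v, x} | x. x \<in> S}) \<union> {{u, x} | x. x \<in> S}))"

definition proper_gts :: "nat \<Rightarrow> nat set set \<Rightarrow> nat \<Rightarrow> nat \<Rightarrow> nat set set \<Rightarrow> bool" where
  "proper_gts n E u v E1 \<longleftrightarrow> gts n E u v E1 \<and> \<not> pendant E u \<and> \<not> pendant E v"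

end

theory Submission
  imports Defs "HOL-Analysis.Function_Topology" "HOL-Analysis.Abstract_Limits"
begin

definition qff :: "nat \<Rightarrow> (nat \<Rightarrow> nat \<Rightarrow> real) \<Rightarrow> (nat \<Rightarrow> real) \<Rightarrow> real" where
  "qff n f x = (\<Sum>i<n. \<Sum>j<n. f i j * x i * x j)"

definition nsq :: "nat \<Rightarrow> (nat \<Rightarrow> real) \<Rightarrow> real" where
  "nsq n x = (\<Sum>i<n. (x i)^2)"

lemma rayleigh_exists:
  assumes "n > 0"
  shows "\<exists>z. nsq n z = 1 \<and> (\<forall>x. nsq n x = 1 \<longrightarrow> qff n f x \<le> qff n f z)"
proof -
  let ?I = "{..<n}"
  let ?X = "product_topology (\<lambda>_. euclideanreal) ?I"
  let ?B = "PiE ?I (\<lambda>_. {-1..1::real})"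
  let ?K = "{x \<in> topspace ?X. nsq n x \<in> {1}}"
  have cB: "compactin ?X ?B" by (simp add: compactin_PiE)
  have cont_nsq: "continuous_map ?X euclideanreal (nsq n)"
    unfolding nsq_def
    by (intro continuous_map_sum continuous_map_real_pow) (auto intro: continuous_map_product_projection)
  have clK: "closedin ?X ?K"
    by (rule closedin_continuous_map_preimage[OF cont_nsq]) auto
  have sq1: "x i \<in> {-1..1}" if "nsq n x = 1" "i < n" for x i
  proof -
    have "(x i)^2 \<le> nsq n x" unfolding nsq_def
      using that(2) by (intro member_le_sum) auto
    then have "(x i)^2 \<le> 1" using that by simp
    then have "\<bar>x i\<bar> \<le> 1" by (simp add: abs_square_le_1)
    then show ?thesis by auto
  qed
  have KB: "?K \<subseteq> ?B" using sq1 by (auto simp: PiE_iff extensional_def)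
  have cK: "compactin ?X ?K" by (rule closed_compactin[OF cB KB clK])
  have cont_q: "continuous_map ?X euclideanreal (qff n f)"
    unfolding qff_def
    by (intro continuous_map_sum continuous_map_real_mult) (auto intro: continuous_map_product_projection)
  have "compactin euclideanreal (qff n f ` ?K)" by (rule image_compactin[OF cK cont_q])
  then have cimg: "compact (qff n f ` ?K)" by simp
  define e where "e = (\<lambda>i::nat. if i = 0 then (1::real) else 0)"
  have "(\<Sum>i<n. (e i)^2) = (\<Sum>i<n. if i = 0 then 1 else 0)"
    by (intro sum.cong) (auto simp: e_def)
  also have "\<dots> = 1" using assms by (simp add: sum.delta)
  finally have "restrict e ?I \<in> ?K" by (auto simp: nsq_def PiE_iff)
  then have ne: "qff n f ` ?K \<noteq> {}" by blast
  obtain z where zK: "z \<in> ?K" and zmax: "\<And>y. y \<in> ?K \<Longrightarrow> qff n f y \<le> qff n f z"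
    using compact_attains_sup[OF cimg ne] by auto
  have rq: "qff n f (restrict x ?I) = qff n f x" for x
    unfolding qff_def by (intro sum.cong refl) auto
  have rn: "nsq n (restrict x ?I) = nsq n x" for x
    unfolding nsq_def by (intro sum.cong refl) auto
  show ?thesis
  proof (intro exI conjI allI impI)
    show "nsq n z = 1" using zK by simp
    fix x assume x: "nsq n x = 1"
    have "restrict x ?I \<in> ?K" using x rn by (auto simp: PiE_iff)
    then show "qff n f x \<le> qff n f z" using zmax rq by metis
  qed
qed

lemma quad_nonpos_lin0:
  fixes a b :: real
  assumes "\<And>t. 2 * t * a + t^2 * b \<le> 0"
  shows "a = 0"
proof (rule ccontr)
  assume a: "a \<noteq> 0"
  define c where "c = \<bar>b\<bar> + 1"
  have c: "c > 0" "\<bar>b\<bar> < c" by (auto simp: c_def)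
  have "2 * (a/c) * a + (a/c)^2 * b \<le> 0" by (rule assms)
  moreover have "2 * (a/c) * a + (a/c)^2 * b = (a^2 / c^2) * (2 * c + b)"
    using c by (simp add: field_simps power2_eq_square)
  moreover have "(a^2 / c^2) * (2 * c + b) > 0"
    using c a by (intro mult_pos_pos) (auto simp: abs_less_iff)
  ultimately show False by simp
qed

definition symf :: "nat \<Rightarrow> (nat \<Rightarrow> nat \<Rightarrow> real) \<Rightarrow> bool" where
  "symf n f \<longleftrightarrow> (\<forall>i<n. \<forall>j<n. f i j = f j i)"

lemma qff_scale: "qff n f (\<lambda>i. c * x i) = c^2 * qff n f x"
  unfolding qff_def by (simp add: sum_distrib_left power2_eq_square algebra_simps)

lemma nsq_scale: "nsq n (\<lambda>i. c * x i) = c^2 * nsq n x"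
  unfolding nsq_def by (simp add: sum_distrib_left power2_eq_square algebra_simps)

lemma nsq_nonneg: "nsq n x \<ge> 0"
  unfolding nsq_def by (simp add: sum_nonneg)

lemma nsq_zero: "nsq n x = 0 \<Longrightarrow> i < n \<Longrightarrow> x i = 0"
  unfolding nsq_def by (subst (asm) sum_nonneg_eq_0_iff) auto

lemma max_homog:
  assumes z: "nsq n z = 1" and zmax: "\<And>x. nsq n x = 1 \<Longrightarrow> qff n f x \<le> qff n f z"
  shows "qff n f y \<le> qff n f z * nsq n y"
proof (cases "nsq n y = 0")
  case True
  then have "qff n f y = 0" unfolding qff_def using nsq_zero[OF True] by simp
  then show ?thesis using True by simp
next
  case False
  then have pos: "nsq n y > 0" using nsq_nonneg[of n y] by simp
  define c where "c = 1 / sqrt (nsq n y)"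
  have c2: "c^2 = 1 / nsq n y" using pos by (simp add: c_def power_divide)
  have "nsq n (\<lambda>i. c * y i) = 1" using c2 pos by (simp add: nsq_scale)
  then have "qff n f (\<lambda>i. c * y i) \<le> qff n f z" by (rule zmax)
  then have "qff n f y / nsq n y \<le> qff n f z" using c2 by (simp add: qff_scale)
  then show ?thesis using pos by (simp add: divide_le_eq mult.commute)
qed

lemma qff_expand:
  assumes "symf n f"
  shows "qff n f (\<lambda>i. z i + t * h i) =
    qff n f z + 2 * t * (\<Sum>i<n. h i * (\<Sum>j<n. f i j * z j)) + t^2 * qff n f h"
proof -
  have "qff n f (\<lambda>i. z i + t * h i) =
     (\<Sum>i<n. \<Sum>j<n. f i j * z i * z j) + t * (\<Sum>i<n. \<Sum>j<n. f i j * h i * z j)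
      + t * (\<Sum>i<n. \<Sum>j<n. f i j * z i * h j) + t^2 * (\<Sum>i<n. \<Sum>j<n. f i j * h i * h j)"
    unfolding qff_def
    by (simp add: sum.distrib sum_distrib_left algebra_simps power2_eq_square)
  moreover have "(\<Sum>i<n. \<Sum>j<n. f i j * z i * h j) = (\<Sum>i<n. \<Sum>j<n. f i j * h i * z j)"
  proof -
    have "(\<Sum>i<n. \<Sum>j<n. f i j * z i * h j) = (\<Sum>j<n. \<Sum>i<n. f i j * z i * h j)"
      by (rule sum.swap)
    also have "\<dots> = (\<Sum>j<n. \<Sum>i<n. f j i * h j * z i)"
      using assms unfolding symf_def by (intro sum.cong refl) (auto simp: algebra_simps)
    finally show ?thesis .
  qed
  moreover have "(\<Sum>i<n. \<Sum>j<n. f i j * h i * z j) = (\<Sum>i<n. h i * (\<Sum>j<n. f i j * z j))"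
    by (simp add: sum_distrib_left algebra_simps)
  ultimately show ?thesis unfolding qff_def by simp
qed

lemma nsq_expand:
  "nsq n (\<lambda>i. z i + t * h i) = nsq n z + 2 * t * (\<Sum>i<n. h i * z i) + t^2 * nsq n h"
  unfolding nsq_def
  by (simp add: sum.distrib sum_distrib_left algebra_simps power2_eq_square)

lemma maximizer_eigen:
  assumes sym: "symf n f" and z: "nsq n z = 1"
    and zmax: "\<And>x. nsq n x = 1 \<Longrightarrow> qff n f x \<le> qff n f z"
    and i: "i < n"
  shows "(\<Sum>j<n. f i j * z j) = qff n f z * z i"
proof -
  define \<mu> where "\<mu> = qff n f z"
  define h where "h = (\<lambda>i. (\<Sum>j<n. f i j * z j) - \<mu> * z i)"
  define a where "a = (\<Sum>i<n. h i * (\<Sum>j<n. f i j * z j)) - \<mu> * (\<Sum>i<n. h i * z i)"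
  have "2 * t * a + t^2 * (qff n f h - \<mu> * nsq n h) \<le> 0" for t
  proof -
    have "qff n f (\<lambda>i. z i + t * h i) \<le> \<mu> * nsq n (\<lambda>i. z i + t * h i)"
      using max_homog[OF z zmax] unfolding \<mu>_def by simp
    then show ?thesis
      unfolding qff_expand[OF sym] nsq_expand a_def using z
      by (simp add: algebra_simps \<mu>_def)
  qed
  then have a0: "a = 0" by (rule quad_nonpos_lin0)
  have "a = (\<Sum>i<n. (h i)^2)"
    unfolding a_def by (simp add: sum_distrib_left sum_subtractf[symmetric] algebra_simps power2_eq_square h_def)
  then have "(\<Sum>i<n. (h i)^2) = 0" using a0 by simp
  then have "h i = 0" using i by (subst (asm) sum_nonneg_eq_0_iff) auto
  then show ?thesis unfolding h_def \<mu>_def by simp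
qed

definition ent :: "real mat \<Rightarrow> nat \<Rightarrow> nat \<Rightarrow> real" where
  "ent M i j = M $$ (i, j)"

lemma mat_vec_comp:
  assumes "M \<in> carrier_mat n n" "i < n"
  shows "(M *\<^sub>v vec n z) $ i = (\<Sum>j<n. ent M i j * z j)"
  using assms by (simp add: scalar_prod_def ent_def lessThan_atLeast0)

lemma spec_char:
  assumes M: "M \<in> carrier_mat n n" and n: "n > 0" and sym: "symf n (ent M)"
  shows "\<exists>z. nsq n z = 1 \<and> (\<forall>x. nsq n x = 1 \<longrightarrow> qff n (ent M) x \<le> qff n (ent M) z)
           \<and> qff n (ent M) z = Max {k. eigenvalue M k}"
proof -
  obtain z where z: "nsq n z = 1" and zmax: "\<And>x. nsq n x = 1 \<Longrightarrow> qff n (ent M) x \<le> qff n (ent M) z"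
    using rayleigh_exists[OF n, of "ent M"] by blast
  define \<mu> where "\<mu> = qff n (ent M) z"
  have ev: "eigenvalue M \<mu>"
  proof -
    have "\<exists>i<n. z i \<noteq> 0"
    proof (rule ccontr)
      assume "\<not> ?thesis"
      then have "nsq n z = 0" unfolding nsq_def by simp
      then show False using z by simp
    qed
    then obtain i where i: "i < n" "z i \<noteq> 0" by blast
    have nz: "vec n z \<noteq> 0\<^sub>v n"
    proof
      assume "vec n z = 0\<^sub>v n"
      then have "vec n z $ i = 0\<^sub>v n $ i" by simp
      then show False using i by simp
    qed
    have "M *\<^sub>v vec n z = \<mu> \<cdot>\<^sub>v vec n z"
    proof (rule eq_vecI)
      fix i assume "i < dim_vec (\<mu> \<cdot>\<^sub>v vec n z)"
      then have i: "i < n" by simp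
      show "(M *\<^sub>v vec n z) $ i = (\<mu> \<cdot>\<^sub>v vec n z) $ i"
        apply (subst mat_vec_comp[OF M i])
        using maximizer_eigen[OF sym z zmax i] i by (simp add: \<mu>_def)
    qed (use M in auto)
    then have "eigenvector M (vec n z) \<mu>" using M nz unfolding eigenvector_def by auto
    then show ?thesis unfolding eigenvalue_def by blast
  qed
  have le: "k \<le> \<mu>" if evk: "eigenvalue M k" for k
  proof -
    have dr: "dim_row M = n" using M by simp
    from evk obtain v where "eigenvector M v k" unfolding eigenvalue_def by blast
    then have v: "v \<in> carrier_vec n" "v \<noteq> 0\<^sub>v n" "M *\<^sub>v v = k \<cdot>\<^sub>v v"
      unfolding eigenvector_def dr by auto
    define x where "x = (\<lambda>i. v $ i)"
    have vx: "v = vec n x" using v(1) by (intro eq_vecI) (auto simp: x_def)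
    have row: "(\<Sum>j<n. ent M i j * x j) = k * x i" if "i < n" for i
    proof -
      have "(M *\<^sub>v v) $ i = (k \<cdot>\<^sub>v v) $ i" using v(3) by simp
      moreover have "(M *\<^sub>v v) $ i = (\<Sum>j<n. ent M i j * x j)"
        unfolding vx by (rule mat_vec_comp[OF M that])
      moreover have "(k \<cdot>\<^sub>v v) $ i = k * x i" using v(1) that by (simp add: x_def)
      ultimately show ?thesis by simp
    qed
    have "qff n (ent M) x = (\<Sum>i<n. x i * (\<Sum>j<n. ent M i j * x j))"
      unfolding qff_def by (simp add: sum_distrib_left algebra_simps)
    also have "\<dots> = (\<Sum>i<n. x i * (k * x i))" by (intro sum.cong refl) (simp add: row)
    also have "\<dots> = k * nsq n x" unfolding nsq_def by (simp add: sum_distrib_left power2_eq_square algebra_simps)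
    finally have q: "qff n (ent M) x = k * nsq n x" .
    have "nsq n x \<noteq> 0"
    proof
      assume "nsq n x = 0"
      then have "v = 0\<^sub>v n" using v(1) nsq_zero[of n x] by (intro eq_vecI) (auto simp: x_def)
      then show False using v(2) by simp
    qed
    then have pos: "nsq n x > 0" using nsq_nonneg[of n x] by simp
    have "k * nsq n x \<le> \<mu> * nsq n x" using max_homog[OF z zmax, of x] q by (simp add: \<mu>_def mult.commute)
    then show ?thesis using pos by simp
  qed
  have fin: "finite {k. eigenvalue M k}"
  proof -
    have "char_poly M \<noteq> 0" using degree_monic_char_poly[OF M] by auto
    then have "finite {k. poly (char_poly M) k = 0}" by (rule poly_roots_finite)
    then show ?thesis using eigenvalue_root_char_poly[OF M] by simp
  qed
  have "Max {k. eigenvalue M k} = \<mu>"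
    by (rule Max_eqI[OF fin]) (use ev le in auto)
  then have "qff n (ent M) z = Max {k. eigenvalue M k}" unfolding \<mu>_def by simp
  then show ?thesis using z zmax by blast
qed

lemma walk_single[simp]: "walk E [x]"
  unfolding walk_def by simp

lemma walk_Cons2[simp]: "walk E (x # y # xs) \<longleftrightarrow> {x, y} \<in> E \<and> walk E (y # xs)"
  unfolding walk_def
  apply (auto simp: nth_Cons split: nat.splits)
  done

lemma walk_snoc:
  assumes "walk E xs" "{last xs, y} \<in> E"
  shows "walk E (xs @ [y])"
  using assms
proof (induction xs rule: induct_list012)
  case 1 then show ?case by (simp add: walk_def)
next
  case (2 x) then show ?case by simp
next
  case (3 x1 x2 xs) then show ?case by simp
qed

lemma walk_append:
  assumes "walk E xs" "walk E ys" "{last xs, hd ys} \<in> E"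
  shows "walk E (xs @ ys)"
  using assms
proof (induction ys arbitrary: xs)
  case Nil then show ?case by (simp add: walk_def)
next
  case (Cons y ys)
  have w1: "walk E (xs @ [y])" using Cons.prems by (intro walk_snoc) auto
  show ?case
  proof (cases ys)
    case Nil then show ?thesis using w1 by simp
  next
    case (Cons y' ys')
    have "walk E ((xs @ [y]) @ ys)"
      using Cons.IH[OF w1] Cons.prems \<open>ys = y' # ys'\<close> by simp
    then show ?thesis by simp
  qed
qed

lemma walk_rev: "walk E xs \<Longrightarrow> walk E (rev xs)"
proof (induction xs rule: induct_list012)
  case 1 then show ?case by (simp add: walk_def)
next
  case (2 x) then show ?case by simp
next
  case (3 x1 x2 xs)
  have "walk E (rev (x2 # xs) @ [x1])"
    by (rule walk_snoc) (use 3 in \<open>auto simp: insert_commute\<close>)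
  then show ?case by simp
qed

lemma walk_ne: "walk E xs \<Longrightarrow> xs \<noteq> []"
  unfolding walk_def by simp

lemma gdist_le:
  assumes "walk E xs" "hd xs = x" "last xs = y"
  shows "gdist E x y \<le> length xs - 1"
proof -
  have "xs \<noteq> []" using assms walk_ne by auto
  then have "length xs = Suc (length xs - 1)" by simp
  then show ?thesis unfolding gdist_def using assms
    by (intro Least_le) blast
qed

lemma gdist_wit:
  assumes "walk E xs" "hd xs = x" "last xs = y"
  shows "\<exists>ys. walk E ys \<and> hd ys = x \<and> last ys = y \<and> length ys = Suc (gdist E x y)"
proof -
  have "xs \<noteq> []" using assms walk_ne by auto
  then have "length xs = Suc (length xs - 1)" by simp
  then have "\<exists>k. \<exists>ys. walk E ys \<and> hd ys = x \<and> last ys = y \<and> length ys = Suc k" using assms by blast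
  then show ?thesis unfolding gdist_def by (rule LeastI_ex)
qed

lemma gdist_ge2:
  assumes "walk E xs" "hd xs = x" "last xs = y" "x \<noteq> y" "{x, y} \<notin> E"
  shows "gdist E x y \<ge> 2"
proof -
  obtain ys where ys: "walk E ys" "hd ys = x" "last ys = y" "length ys = Suc (gdist E x y)"
    using gdist_wit[OF assms(1-3)] by blast
  show ?thesis
  proof (rule ccontr)
    assume "\<not> ?thesis"
    then have "gdist E x y = 0 \<or> gdist E x y = 1" by auto
    then show False
    proof
      assume "gdist E x y = 0"
      then obtain a where "ys = [a]" using ys(4) by (cases ys) auto
      then show False using ys assms(4) by simp
    next
      assume "gdist E x y = 1"
      then obtain a b where "ys = [a, b]" using ys(4)
        by (cases ys; cases "tl ys") auto
      then show False using ys assms(5) by simp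
    qed
  qed
qed

lemma gdist_ge1:
  assumes "walk E xs" "hd xs = x" "last xs = y" "x \<noteq> y"
  shows "gdist E x y \<ge> 1"
proof -
  obtain ys where ys: "walk E ys" "hd ys = x" "last ys = y" "length ys = Suc (gdist E x y)"
    using gdist_wit[OF assms(1-3)] by blast
  show ?thesis
  proof (rule ccontr)
    assume "\<not> ?thesis"
    then have "gdist E x y = 0" by auto
    then obtain a where "ys = [a]" using ys(4) by (cases ys) auto
    then show False using ys assms(4) by simp
  qed
qed

lemma gdist_edge:
  assumes "{x, y} \<in> E" "x \<noteq> y"
  shows "gdist E x y = 1"
proof -
  have w: "walk E [x, y]" using assms by simp
  have "gdist E x y \<le> 1" using gdist_le[OF w] by simp
  moreover have "gdist E x y \<ge> 1" using gdist_ge1[OF w] assms by simp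
  ultimately show ?thesis by simp
qed

lemma gdist_sym_le:
  assumes xs: "walk E xs" "hd xs = y" "last xs = x"
  shows "gdist E x y \<le> gdist E y x"
proof -
  obtain ys where ys: "walk E ys" "hd ys = y" "last ys = x" "length ys = Suc (gdist E y x)"
    using gdist_wit[OF xs] by blast
  have ne: "ys \<noteq> []" using ys walk_ne by auto
  have "gdist E x y \<le> length (rev ys) - 1"
    by (rule gdist_le) (use ys ne walk_rev in \<open>auto simp: hd_rev last_rev\<close>)
  then show ?thesis using ys by simp
qed

lemma gdist_sym: "gdist E x y = gdist E y x"
proof (cases "\<exists>xs. walk E xs \<and> hd xs = y \<and> last xs = x")
  case True
  then obtain xs where xs: "walk E xs" "hd xs = y" "last xs = x" by blast
  have ne: "xs \<noteq> []" using xs walk_ne by auto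
  have "gdist E x y \<le> gdist E y x" by (rule gdist_sym_le[OF xs])
  moreover have "gdist E y x \<le> gdist E x y"
    by (rule gdist_sym_le[of E "rev xs"]) (use xs ne walk_rev in \<open>auto simp: hd_rev last_rev\<close>)
  ultimately show ?thesis by simp
next
  case False
  then have F2: "\<not> (\<exists>xs. walk E xs \<and> hd xs = x \<and> last xs = y)"
    using walk_rev walk_ne by (metis hd_rev last_rev rev_rev_ident)
  have "(\<lambda>k. \<exists>xs. walk E xs \<and> hd xs = x \<and> last xs = y \<and> length xs = Suc k)
      = (\<lambda>k. \<exists>xs. walk E xs \<and> hd xs = y \<and> last xs = x \<and> length xs = Suc k)"
    using False F2 by blast
  then show ?thesis unfolding gdist_def by simp
qed

lemma walk_ext:
  assumes "walk E xs" "hd xs = x" "last xs = a" "a = b \<or> {a, b} \<in> E"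
  shows "\<exists>ys. walk E ys \<and> hd ys = x \<and> last ys = b \<and> length ys \<le> Suc (length xs)"
proof (cases "a = b")
  case True then show ?thesis using assms by auto
next
  case False
  then have e: "{a, b} \<in> E" using assms by simp
  have ne: "xs \<noteq> []" using assms walk_ne by auto
  have "walk E (xs @ [b])" using walk_snoc[OF assms(1)] e assms(3) by simp
  then show ?thesis using ne assms by (intro exI[of _ "xs @ [b]"]) auto
qed

lemma short3:
  assumes "x = a \<or> {x, a} \<in> E" "a = b \<or> {a, b} \<in> E" "b = y \<or> {b, y} \<in> E"
  shows "gdist E x y \<le> 3"
proof -
  obtain ys1 where y1: "walk E ys1" "hd ys1 = x" "last ys1 = a" "length ys1 \<le> 2"
    using walk_ext[of E "[x]" x x a] assms(1) by auto
  obtain ys2 where y2: "walk E ys2" "hd ys2 = x" "last ys2 = b" "length ys2 \<le> 3"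
    using walk_ext[OF y1(1-3) assms(2)] y1(4) by fastforce
  obtain ys3 where y3: "walk E ys3" "hd ys3 = x" "last ys3 = y" "length ys3 \<le> 4"
    using walk_ext[OF y2(1-3) assms(3)] y2(4) by fastforce
  show ?thesis using gdist_le[OF y3(1-3)] y3(4) by simp
qed

lemma graph_edge: "graph n E \<Longrightarrow> {x, y} \<in> E \<Longrightarrow> x < n \<and> y < n \<and> x \<noteq> y"
  unfolding graph_def by (metis doubleton_eq_iff)

lemma nbrs_fin: "graph n E \<Longrightarrow> finite (nbrs E x)"
proof -
  assume g: "graph n E"
  have "nbrs E x \<subseteq> {..<n}" using graph_edge[OF g] by (auto simp: nbrs_def)
  then show ?thesis using finite_subset by blast
qed

lemma cycleI:
  assumes "walk E xs" "length xs \<ge> 4" "hd xs = last xs" "distinct (tl xs)"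
  shows "has_cycle E"
  using assms unfolding has_cycle_def by blast

locale gsetup =
  fixes n :: nat and T :: "nat set set" and p :: "nat list"
  assumes graphT: "graph n T" and acyc: "\<not> has_cycle T"
    and pathp: "path T p" and len: "length p \<ge> 2"
    and int2: "\<forall>i. 0 < i \<and> i < length p - 1 \<longrightarrow> deg T (p ! i) = 2"
    and npu: "\<not> pendant T (p ! 0)" and npv: "\<not> pendant T (p ! (length p - 1))"
begin

abbreviation "k \<equiv> length p - 1"
abbreviation "u \<equiv> p ! 0"
abbreviation "v \<equiv> p ! k"
abbreviation "w \<equiv> p ! (k - 1)"
abbreviation "S \<equiv> nbrs T v - {w}"
abbreviation "R \<equiv> nbrs T u - {p ! 1}"

lemma k1: "k \<ge> 1" using len by simp

lemma dist: "distinct p" using pathp unfolding path_def by simp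

lemma walkp: "walk T p" using pathp unfolding path_def by simp

lemma pedge: "i < k \<Longrightarrow> {p ! i, p ! Suc i} \<in> T"
  using walkp unfolding walk_def by simp

lemma pinj: "i \<le> k \<Longrightarrow> j \<le> k \<Longrightarrow> p ! i = p ! j \<longleftrightarrow> i = j"
  using dist len by (simp add: nth_eq_iff_index_eq)

lemma noloop: "{x, x} \<notin> T"
  using graph_edge[OF graphT] by blast

lemma edge_sym: "{x, y} \<in> T \<longleftrightarrow> {y, x} \<in> T"
  by (simp add: insert_commute)

lemma in_nbrs: "y \<in> nbrs T x \<longleftrightarrow> {x, y} \<in> T"
  unfolding nbrs_def by simp

lemma ltn: "{x, y} \<in> T \<Longrightarrow> x < n \<and> y < n"
  using graph_edge[OF graphT] by blast

lemma p_lt: "i \<le> k \<Longrightarrow> p ! i < n"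
proof -
  assume i: "i \<le> k"
  show ?thesis
  proof (cases "i < k")
    case True then show ?thesis using ltn[OF pedge[OF True]] by simp
  next
    case False
    then have "i = Suc (k - 1)" using i k1 by simp
    then show ?thesis using ltn[OF pedge[of "k - 1"]] k1 by simp
  qed
qed

lemma uv: "u \<noteq> v" using pinj[of 0 k] k1 by simp

lemma int_nbrs:
  assumes "0 < i" "i < k"
  shows "nbrs T (p ! i) = {p ! (i - 1), p ! (i + 1)}"
proof -
  have d: "card (nbrs T (p ! i)) = 2" using int2 assms unfolding deg_def by auto
  have a: "p ! (i - 1) \<in> nbrs T (p ! i)"
    using pedge[of "i - 1"] assms by (simp add: in_nbrs edge_sym)
  have b: "p ! (i + 1) \<in> nbrs T (p ! i)"
    using pedge[of i] assms by (simp add: in_nbrs)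
  have ne: "p ! (i - 1) \<noteq> p ! (i + 1)" using pinj[of "i - 1" "i + 1"] assms by simp
  have sub: "{p ! (i - 1), p ! (i + 1)} \<subseteq> nbrs T (p ! i)" using a b by simp
  have "card {p ! (i - 1), p ! (i + 1)} = 2" using ne by simp
  then show ?thesis using card_subset_eq[OF nbrs_fin[OF graphT] sub] d by simp
qed

lemma p_split: "p = u # tl p"
  using len by (cases p) auto

lemma u_notin_tl: "u \<notin> set (tl p)"
  using dist p_split by (metis distinct.simps(2))

lemma last_p: "last p = v"
  using len by (subst last_conv_nth) auto

lemma pedge': "0 < i \<Longrightarrow> i \<le> k \<Longrightarrow> {p ! (i - 1), p ! i} \<in> T"
  using pedge[of "i - 1"] by simp

lemma wv: "{w, v} \<in> T" using pedge'[of k] k1 by simp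

lemma F1: "k \<ge> 2 \<Longrightarrow> {u, v} \<notin> T"
proof
  assume k2: "k \<ge> 2" and e: "{u, v} \<in> T"
  have "walk T (p @ [u])" using walk_snoc[OF walkp] e last_p by (simp add: insert_commute)
  moreover have "length (p @ [u]) \<ge> 4" using k2 by simp
  moreover have "hd (p @ [u]) = last (p @ [u])" using len by (cases p) auto
  moreover have "distinct (tl (p @ [u]))"
    using dist u_notin_tl len by (cases p) auto
  ultimately show False using cycleI acyc by blast
qed

lemma S_off: "s \<in> S \<Longrightarrow> s \<notin> set p"
proof
  assume s: "s \<in> S" and sp: "s \<in> set p"
  then obtain j where j: "j < length p" "p ! j = s" by (auto simp: in_set_conv_nth)
  have jk: "j \<le> k" using j by simp
  have e: "{v, s} \<in> T" using s by (simp add: in_nbrs)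
  show False
  proof (cases "j = k")
    case True then show False using e j noloop by simp
  next
    case False
    show False
    proof (cases "j = k - 1")
      case True then show False using s j by simp
    next
      case jk1: False
      show False
      proof (cases "j = 0")
        case True
        then have "k \<ge> 2" using jk1 k1 by (cases "k = 1") auto
        then show False using F1 e True j by (simp add: insert_commute)
      next
        case j0: False
        have "j < k - 1" using jk jk1 False by simp
        have "v \<in> nbrs T (p ! j)" using e j by (simp add: in_nbrs insert_commute)
        then have "v \<in> {p ! (j - 1), p ! (j + 1)}"
          using int_nbrs[of j] j0 \<open>j < k - 1\<close> by simp
        then show False using pinj[of k "j - 1"] pinj[of k "j + 1"] \<open>j < k - 1\<close> by auto
      qed
    qed
  qed
qed

lemma R_off: "r \<in> R \<Longrightarrow> r \<notin> set p"
proof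
  assume r: "r \<in> R" and rp: "r \<in> set p"
  then obtain j where j: "j < length p" "p ! j = r" by (auto simp: in_set_conv_nth)
  have jk: "j \<le> k" using j by simp
  have e: "{u, r} \<in> T" using r by (simp add: in_nbrs)
  show False
  proof (cases "j = 0")
    case True then show False using e j noloop by simp
  next
    case j0: False
    show False
    proof (cases "j = 1")
      case True then show False using r j by simp
    next
      case j1: False
      show False
      proof (cases "j = k")
        case True
        then have "k \<ge> 2" using j0 j1 by simp
        then show False using F1 e True j by simp
      next
        case False
        then have "j < k" using jk by simp
        have "u \<in> nbrs T (p ! j)" using e j by (simp add: in_nbrs insert_commute)
        then have "u \<in> {p ! (j - 1), p ! (j + 1)}"
          using int_nbrs[of j] j0 \<open>j < k\<close> by simp
        then show False using pinj[of 0 "j - 1"] pinj[of 0 "j + 1"] \<open>j < k\<close> j0 j1 by auto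
      qed
    qed
  qed
qed

lemma RS: "r \<in> R \<Longrightarrow> r \<notin> S"
proof
  assume r: "r \<in> R" and rs: "r \<in> S"
  have e1: "{v, r} \<in> T" using rs by (simp add: in_nbrs)
  have e2: "{r, u} \<in> T" using r by (simp add: in_nbrs insert_commute)
  have ru: "r \<noteq> u" using e2 noloop by auto
  have "walk T [r, u]" using e2 by simp
  then have "walk T (p @ [r, u])" using walk_append[OF walkp] e1 last_p by simp
  moreover have "length (p @ [r, u]) \<ge> 4" using len by simp
  moreover have "hd (p @ [r, u]) = last (p @ [r, u])" using len by (cases p) auto
  moreover have "distinct (tl (p @ [r, u]))"
    using dist u_notin_tl len R_off[OF r] ru by (cases p) auto
  ultimately show False using cycleI acyc by blast
qed

lemma S_ne: "S \<noteq> {}"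
proof
  assume S0: "S = {}"
  have "w \<in> nbrs T v" using wv by (simp add: in_nbrs insert_commute)
  then have "nbrs T v = {w}" using S0 by auto
  then show False using npv unfolding pendant_def deg_def by simp
qed

lemma R_ne: "R \<noteq> {}"
proof
  assume R0: "R = {}"
  have "p ! 1 \<in> nbrs T u" using pedge[of 0] k1 by (simp add: in_nbrs)
  then have "nbrs T u = {p ! 1}" using R0 by auto
  then show False using npu unfolding pendant_def deg_def by simp
qed

lemma P4:
  assumes ab: "a < b" "b \<le> k" and e: "{p ! a, p ! b} \<in> T"
  shows "b = a + 1"
proof (cases "a = 0")
  case False
  have "p ! b \<in> nbrs T (p ! a)" using e by (simp add: in_nbrs)
  then have "p ! b \<in> {p ! (a - 1), p ! (a + 1)}"
    using int_nbrs[of a] ab False by simp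
  then show ?thesis using pinj[of b "a - 1"] pinj[of b "a + 1"] ab by auto
next
  case True
  show ?thesis
  proof (cases "b = k")
    case True
    then have "\<not> k \<ge> 2" using F1 e \<open>a = 0\<close> by auto
    then show ?thesis using ab True \<open>a = 0\<close> by simp
  next
    case False
    have "p ! a \<in> nbrs T (p ! b)" using e by (simp add: in_nbrs insert_commute)
    then have "p ! a \<in> {p ! (b - 1), p ! (b + 1)}"
      using int_nbrs[of b] ab False True by simp
    then show ?thesis using pinj[of a "b - 1"] pinj[of a "b + 1"] ab False True by auto
  qed
qed

end

lemma memD: "{x, y} \<in> {{c, z} |z. z \<in> X} \<longleftrightarrow> (x = c \<and> y \<in> X) \<or> (y = c \<and> x \<in> X)"
  by (auto simp: doubleton_eq_iff)

context gsetup
begin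

definition padj :: "nat \<Rightarrow> nat \<Rightarrow> bool" where
  "padj a y \<longleftrightarrow> (\<exists>b\<le>k. y = p ! b \<and> (b = a + 1 \<or> a = b + 1))"

abbreviation "T1 \<equiv> (T - {{v, x} |x. x \<in> S}) \<union> {{u, x} |x. x \<in> S}"
abbreviation "Tr \<equiv> (T - {{u, x} |x. x \<in> R}) \<union> {{v, x} |x. x \<in> R}"

lemma padj_p: "a \<le> k \<Longrightarrow> c \<le> k \<Longrightarrow> padj a (p ! c) \<longleftrightarrow> (c = a + 1 \<or> a = c + 1)"
  unfolding padj_def using pinj by auto

lemma padj_off: "y \<notin> set p \<Longrightarrow> \<not> padj a y"
  unfolding padj_def using len by auto

lemma p_in: "i \<le> k \<Longrightarrow> p ! i \<in> set p"
  using len by simp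

lemma adjT:
  assumes a: "a \<le> k"
  shows "{p ! a, y} \<in> T \<longleftrightarrow> padj a y \<or> (a = 0 \<and> y \<in> R) \<or> (a = k \<and> y \<in> S)"
proof
  assume e: "{p ! a, y} \<in> T"
  show "padj a y \<or> (a = 0 \<and> y \<in> R) \<or> (a = k \<and> y \<in> S)"
  proof (cases "y \<in> set p")
    case True
    then obtain b where b: "b < length p" "y = p ! b" by (auto simp: in_set_conv_nth)
    have bk: "b \<le> k" using b by simp
    have "a \<noteq> b" using e b noloop by auto
    then have "a < b \<or> b < a" by auto
    then have "b = a + 1 \<or> a = b + 1"
    proof
      assume "a < b" then show ?thesis using P4[of a b] e b bk by simp
    next
      assume "b < a" then show ?thesis using P4[of b a] e b a by (simp add: insert_commute)
    qed
    then have "padj a y" using b bk unfolding padj_def by blast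
    then show ?thesis by simp
  next
    case False
    have yn: "y \<in> nbrs T (p ! a)" using e by (simp add: in_nbrs)
    show ?thesis
    proof (cases "0 < a \<and> a < k")
      case True
      then have "y \<in> {p ! (a - 1), p ! (a + 1)}" using int_nbrs[of a] yn by simp
      then show ?thesis using False p_in[of "a - 1"] p_in[of "a + 1"] True by auto
    next
      case ak: False
      then have "a = 0 \<or> a = k" using a by auto
      then show ?thesis
      proof
        assume a0: "a = 0"
        have "y \<noteq> p ! 1" using False p_in[of 1] k1 by auto
        then show ?thesis using yn a0 by simp
      next
        assume a0: "a = k"
        have "y \<noteq> w" using False p_in[of "k - 1"] by auto
        then show ?thesis using yn a0 by simp
      qed
    qed
  qed
next
  assume h: "padj a y \<or> (a = 0 \<and> y \<in> R) \<or> (a = k \<and> y \<in> S)"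
  then show "{p ! a, y} \<in> T"
  proof (elim disjE)
    assume "padj a y"
    then obtain b where b: "b \<le> k" "y = p ! b" "b = a + 1 \<or> a = b + 1" unfolding padj_def by blast
    from b(3) show ?thesis
    proof
      assume "b = a + 1" then show ?thesis using pedge[of a] b by simp
    next
      assume "a = b + 1" then show ?thesis using pedge[of b] b a by (simp add: insert_commute)
    qed
  next
    assume "a = 0 \<and> y \<in> R" then show ?thesis by (simp add: in_nbrs)
  next
    assume "a = k \<and> y \<in> S" then show ?thesis by (simp add: in_nbrs)
  qed
qed

lemma adjT1:
  assumes a: "a \<le> k"
  shows "{p ! a, y} \<in> T1 \<longleftrightarrow> padj a y \<or> (a = 0 \<and> (y \<in> R \<or> y \<in> S))"
proof -
  have v1: "{p ! a, y} \<in> {{v, x} |x. x \<in> S} \<longleftrightarrow> a = k \<and> y \<in> S"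
    unfolding memD using S_off[of "p ! a"] p_in[OF a] pinj[OF a, of k] by auto
  have u1: "{p ! a, y} \<in> {{u, x} |x. x \<in> S} \<longleftrightarrow> a = 0 \<and> y \<in> S"
    unfolding memD using S_off[of "p ! a"] p_in[OF a] pinj[OF a, of 0] by auto
  have x1: "\<not> (padj a y \<and> y \<in> S)" using padj_off S_off by blast
  have x2: "\<not> (padj a y \<and> y \<in> R)" using padj_off R_off by blast
  show ?thesis using adjT[OF a] v1 u1 x1 x2 k1 by auto
qed

lemma adjTr:
  assumes a: "a \<le> k"
  shows "{p ! a, y} \<in> Tr \<longleftrightarrow> padj a y \<or> (a = k \<and> (y \<in> R \<or> y \<in> S))"
proof -
  have v1: "{p ! a, y} \<in> {{u, x} |x. x \<in> R} \<longleftrightarrow> a = 0 \<and> y \<in> R"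
    unfolding memD using R_off[of "p ! a"] p_in[OF a] pinj[OF a, of 0] by auto
  have u1: "{p ! a, y} \<in> {{v, x} |x. x \<in> R} \<longleftrightarrow> a = k \<and> y \<in> R"
    unfolding memD using R_off[of "p ! a"] p_in[OF a] pinj[OF a, of k] by auto
  have x1: "\<not> (padj a y \<and> y \<in> S)" using padj_off S_off by blast
  have x2: "\<not> (padj a y \<and> y \<in> R)" using padj_off R_off by blast
  show ?thesis using adjT[OF a] v1 u1 x1 x2 k1 by auto
qed

lemma u_in: "u \<in> set p" using p_in[of 0] by simp
lemma v_in: "v \<in> set p" using p_in[of k] by simp

lemma offT1: "x \<notin> set p \<Longrightarrow> y \<notin> set p \<Longrightarrow> {x, y} \<in> T1 \<longleftrightarrow> {x, y} \<in> T"
  unfolding memD using u_in v_in by auto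

lemma offTr: "x \<notin> set p \<Longrightarrow> y \<notin> set p \<Longrightarrow> {x, y} \<in> Tr \<longleftrightarrow> {x, y} \<in> T"
  unfolding memD using u_in v_in by auto

definition sig :: "nat \<Rightarrow> nat" where
  "sig z = (case map_of (zip p (rev p)) z of Some y \<Rightarrow> y | None \<Rightarrow> z)"

lemma sig_p: "i \<le> k \<Longrightarrow> sig (p ! i) = p ! (k - i)"
proof -
  assume i: "i \<le> k"
  have "map_of (zip p (rev p)) (p ! i) = Some (rev p ! i)"
    using dist i len by (intro map_of_zip_nth) auto
  moreover have "rev p ! i = p ! (k - i)" using i len by (simp add: rev_nth)
  ultimately show ?thesis unfolding sig_def by simp
qed

lemma sig_off: "z \<notin> set p \<Longrightarrow> sig z = z"
proof -
  assume z: "z \<notin> set p"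
  have "fst ` set (zip p (rev p)) = set p" by (metis length_rev map_fst_zip set_map)
  then have N: "map_of (zip p (rev p)) z = None"
    using z by (simp add: map_of_eq_None_iff)
  show ?thesis unfolding sig_def N by simp
qed

lemma sig_sig: "sig (sig z) = z"
proof (cases "z \<in> set p")
  case True
  then obtain i where i: "i < length p" "z = p ! i" by (auto simp: in_set_conv_nth)
  then show ?thesis using sig_p[of i] sig_p[of "k - i"] by simp
next
  case False then show ?thesis by (simp add: sig_off)
qed

lemma sig_lt: "z < n \<Longrightarrow> sig z < n"
proof (cases "z \<in> set p")
  case True
  then obtain i where i: "i < length p" "z = p ! i" by (auto simp: in_set_conv_nth)
  then show ?thesis using sig_p[of i] p_lt[of "k - i"] by simp
next
  case False then show "z < n \<Longrightarrow> sig z < n" by (simp add: sig_off)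
qed

lemma sig_bij: "bij_betw sig {..<n} {..<n}"
  by (rule bij_betw_byWitness[of _ sig]) (auto simp: sig_sig sig_lt)

lemma iso_on: "i \<in> set p \<Longrightarrow> {sig i, sig j} \<in> T1 \<longleftrightarrow> {i, j} \<in> Tr"
proof -
  assume "i \<in> set p"
  then obtain a where a: "a < length p" "i = p ! a" by (auto simp: in_set_conv_nth)
  have ak: "a \<le> k" using a by simp
  have ka: "k - a \<le> k" by simp
  show ?thesis
  proof (cases "j \<in> set p")
    case True
    then obtain b where b: "b < length p" "j = p ! b" by (auto simp: in_set_conv_nth)
    have bk: "b \<le> k" using b by simp
    have e1: "{sig i, sig j} = {p ! (k - a), p ! (k - b)}" using sig_p[OF ak] sig_p[OF bk] a b by simp
    have nR: "p ! (k - b) \<notin> R" using R_off p_in[OF diff_le_self] by blast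
    have nS: "p ! (k - b) \<notin> S" using S_off p_in[OF diff_le_self] by blast
    have "{sig i, sig j} \<in> T1 \<longleftrightarrow> padj (k - a) (p ! (k - b))"
      unfolding e1 adjT1[OF ka, of "p ! (k - b)"] using nR nS by blast
    also have "\<dots> \<longleftrightarrow> (b = a + 1 \<or> a = b + 1)"
      using padj_p[OF ka, of "k - b"] ak bk by auto
    also have "\<dots> \<longleftrightarrow> {i, j} \<in> Tr"
    proof -
      have nR: "p ! b \<notin> R" using R_off p_in[OF bk] by blast
      have nS: "p ! b \<notin> S" using S_off p_in[OF bk] by blast
      show ?thesis unfolding a(2) b(2) adjTr[OF ak, of "p ! b"] padj_p[OF ak bk] using nR nS by blast
    qed
    finally show ?thesis .
  next
    case False
    have "{sig i, sig j} \<in> T1 \<longleftrightarrow> (k - a = 0 \<and> (j \<in> R \<or> j \<in> S))"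
      using adjT1[OF ka, of j] sig_p[OF ak] sig_off[OF False] a padj_off[OF False] by auto
    also have "\<dots> \<longleftrightarrow> (a = k \<and> (j \<in> R \<or> j \<in> S))" using ak by auto
    also have "\<dots> \<longleftrightarrow> {i, j} \<in> Tr"
      using adjTr[OF ak, of j] a padj_off[OF False] by auto
    finally show ?thesis .
  qed
qed

lemma iso: "{sig i, sig j} \<in> T1 \<longleftrightarrow> {i, j} \<in> Tr"
proof (cases "i \<in> set p")
  case True then show ?thesis by (rule iso_on)
next
  case False
  show ?thesis
  proof (cases "j \<in> set p")
    case True
    then show ?thesis using iso_on[of j i] by (simp add: insert_commute)
  next
    case jF: False
    then show ?thesis using False sig_off offT1 offTr by simp
  qed
qed

end

lemma compl_edge: "x < n \<Longrightarrow> y < n \<Longrightarrow> x \<noteq> y \<Longrightarrow> {x, y} \<notin> E \<Longrightarrow> {x, y} \<in> complement n E"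
  unfolding complement_def by (intro CollectI exI[of _ x] exI[of _ y]) simp

lemma compl_nedge: "{x, y} \<in> E \<Longrightarrow> {x, y} \<notin> complement n E"
proof
  assume e: "{x, y} \<in> E" and "{x, y} \<in> complement n E"
  then obtain a b where ab: "{x, y} = {a, b}" "{a, b} \<notin> E" unfolding complement_def by blast
  then show False using e by simp
qed

lemma compl_walk:
  assumes a: "a < n" and b: "b < n" and ab: "a \<noteq> b" "{a, b} \<notin> E"
    and H: "\<forall>z<n. z \<noteq> a \<longrightarrow> z \<noteq> b \<longrightarrow> {a, z} \<notin> E \<or> {b, z} \<notin> E"
    and i: "i < n" and j: "j < n"
  shows "\<exists>xs. walk (complement n E) xs \<and> hd xs = i \<and> last xs = j"
proof -
  let ?G = "complement n E"
  have anc: "\<exists>c. (c = a \<or> c = b) \<and> (z = c \<or> {z, c} \<in> ?G)" if z: "z < n" for z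
  proof (cases "z = a \<or> z = b")
    case True then show ?thesis by blast
  next
    case False
    then have "{a, z} \<notin> E \<or> {b, z} \<notin> E" using H z by auto
    then show ?thesis
    proof
      assume "{a, z} \<notin> E"
      then have "{z, a} \<in> ?G" using compl_edge[of z n a E] z a False by (simp add: insert_commute)
      then show ?thesis by blast
    next
      assume "{b, z} \<notin> E"
      then have "{z, b} \<in> ?G" using compl_edge[of z n b E] z b False by (simp add: insert_commute)
      then show ?thesis by blast
    qed
  qed
  obtain c where c: "c = a \<or> c = b" "i = c \<or> {i, c} \<in> ?G" using anc[OF i] by blast
  obtain d where d: "d = a \<or> d = b" "j = d \<or> {j, d} \<in> ?G" using anc[OF j] by blast
  have abG: "{a, b} \<in> ?G" "{b, a} \<in> ?G" using compl_edge[OF a b ab] by (auto simp: insert_commute)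
  have cd: "c = d \<or> {c, d} \<in> ?G" using c(1) d(1) abG by auto
  have dj: "d = j \<or> {d, j} \<in> ?G" using d(2) by (auto simp: insert_commute)
  obtain ys1 where y1: "walk ?G ys1" "hd ys1 = i" "last ys1 = c"
    using walk_ext[of ?G "[i]" i i c] c(2) by auto
  obtain ys2 where y2: "walk ?G ys2" "hd ys2 = i" "last ys2 = d"
    using walk_ext[OF y1 cd] by blast
  obtain ys3 where y3: "walk ?G ys3" "hd ys3 = i" "last ys3 = j"
    using walk_ext[OF y2 dj] by blast
  then show ?thesis by blast
qed

lemma gdist_compl_lb:
  assumes w: "walk (complement n E) xs" "hd xs = i" "last xs = j" and ij: "i \<noteq> j"
  shows "real (gdist (complement n E) i j) \<ge> (if {i, j} \<in> E then 2 else 1)"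
proof (cases "{i, j} \<in> E")
  case True
  then have "gdist (complement n E) i j \<ge> 2" using gdist_ge2[OF w ij compl_nedge[OF True]] by simp
  then show ?thesis using True by simp
next
  case False
  then show ?thesis using gdist_ge1[OF w ij] by simp
qed

lemma gdist_self: "gdist E i i = 0"
  using gdist_le[of E "[i]" i i] by simp

lemma diam_wit:
  assumes n: "n > 0" and d: "diam n T \<ge> 4"
  shows "\<exists>x y. x < n \<and> y < n \<and> gdist T x y \<ge> 4"
proof -
  define A where "A = {gdist T x y | x y. x < n \<and> y < n}"
  have "A \<subseteq> (\<lambda>(x, y). gdist T x y) ` ({..<n} \<times> {..<n})"
  proof
    fix a assume "a \<in> A"
    then obtain x y where xy: "a = gdist T x y" "x < n" "y < n" unfolding A_def by blast
    then show "a \<in> (\<lambda>(x, y). gdist T x y) ` ({..<n} \<times> {..<n})"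
      by (intro rev_image_eqI[of "(x, y)"]) auto
  qed
  then have fin: "finite A" by (rule finite_subset) simp
  have "gdist T 0 0 \<in> A" unfolding A_def using n by (intro CollectI exI[of _ 0]) simp
  then have ne: "A \<noteq> {}" by blast
  have "Max A \<in> A" using Max_in[OF fin ne] .
  then obtain x y where xy: "Max A = gdist T x y" "x < n" "y < n" unfolding A_def by blast
  have "diam n T = Max A" unfolding diam_def A_def by simp
  then show ?thesis using d xy by auto
qed

lemma far_from_edge:
  assumes x0: "x0 < n" and y0: "y0 < n" and g4: "gdist T x0 y0 \<ge> 4" and e: "{i, j} \<in> T"
  shows "\<exists>z<n. z \<noteq> i \<and> z \<noteq> j \<and> {i, z} \<notin> T \<and> {j, z} \<notin> T"
proof (rule ccontr)
  assume "\<not> ?thesis"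
  then have H: "\<And>z. z < n \<Longrightarrow> z = i \<or> z = j \<or> {i, z} \<in> T \<or> {j, z} \<in> T" by blast
  have anc: "\<exists>c. (c = i \<or> c = j) \<and> (z = c \<or> {z, c} \<in> T)" if "z < n" for z
    using H[OF that] by (metis insert_commute)
  obtain c where c: "c = i \<or> c = j" "x0 = c \<or> {x0, c} \<in> T" using anc[OF x0] by blast
  obtain d where d: "d = i \<or> d = j" "y0 = d \<or> {y0, d} \<in> T" using anc[OF y0] by blast
  have e': "{j, i} \<in> T" using e by (simp add: insert_commute)
  have cd: "c = d \<or> {c, d} \<in> T" using c(1) d(1) e e' by blast
  have dy: "d = y0 \<or> {d, y0} \<in> T" using d(2) by (metis insert_commute)
  have "gdist T x0 y0 \<le> 3" by (rule short3[OF c(2) cd dy])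
  then show False using g4 by simp
qed

lemma qff_mono:
  assumes "\<forall>i<n. x i \<ge> 0" "\<forall>i<n. \<forall>j<n. f i j \<ge> g i j"
  shows "qff n f x \<ge> qff n g x"
  unfolding qff_def using assms
  by (intro sum_mono) (auto intro!: mult_right_mono)

lemma qff_cong:
  assumes "\<forall>i<n. \<forall>j<n. f i j = g i j"
  shows "qff n f x = qff n g x"
  unfolding qff_def using assms by (intro sum.cong refl) auto

lemma qff_lin: "qff n (\<lambda>i j. f i j + g i j - h i j) x = qff n f x + qff n g x - qff n h x"
  unfolding qff_def by (simp add: sum.distrib sum_subtractf algebra_simps)

definition ind :: "nat \<Rightarrow> nat set \<Rightarrow> nat \<Rightarrow> nat \<Rightarrow> real" where
  "ind a X i j = (if (i = a \<and> j \<in> X) \<or> (j = a \<and> i \<in> X) then 1 else 0)"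

lemma row_ind:
  assumes a: "a < n" and X: "X \<subseteq> {..<n}" and aX: "a \<notin> X"
  shows "(\<Sum>j<n. ind a X i j * x j) = (if i = a then (\<Sum>j\<in>X. x j) else 0) + (if i \<in> X then x a else 0)"
proof -
  have "(\<Sum>j<n. ind a X i j * x j) = (\<Sum>j<n. (if i = a \<and> j \<in> X then x j else 0) + (if j = a \<and> i \<in> X then x j else 0))"
    unfolding ind_def using aX by (intro sum.cong refl) auto
  also have "\<dots> = (\<Sum>j<n. if i = a \<and> j \<in> X then x j else 0) + (\<Sum>j<n. if j = a \<and> i \<in> X then x j else 0)"
    by (simp add: sum.distrib)
  also have "(\<Sum>j<n. if i = a \<and> j \<in> X then x j else 0) = (if i = a then (\<Sum>j\<in>X. x j) else 0)"
  proof (cases "i = a")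
    case True
    have "(\<Sum>j<n. if j \<in> X then x j else 0) = (\<Sum>j\<in>{..<n} \<inter> X. x j)"
      by (simp add: sum.inter_restrict)
    also have "{..<n} \<inter> X = X" using X by auto
    finally show ?thesis using True by simp
  qed simp
  also have "(\<Sum>j<n. if j = a \<and> i \<in> X then x j else 0) = (if i \<in> X then x a else 0)"
    using a by (cases "i \<in> X") (simp_all add: sum.delta')
  finally show ?thesis .
qed

lemma qff_ind:
  assumes a: "a < n" and X: "X \<subseteq> {..<n}" and aX: "a \<notin> X"
  shows "qff n (ind a X) x = 2 * x a * (\<Sum>j\<in>X. x j)"
proof -
  have "qff n (ind a X) x = (\<Sum>i<n. x i * (\<Sum>j<n. ind a X i j * x j))"
    unfolding qff_def by (simp add: sum_distrib_left algebra_simps)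
  also have "\<dots> = (\<Sum>i<n. (if i = a then x a * (\<Sum>j\<in>X. x j) else 0) + (if i \<in> X then x i * x a else 0))"
    using row_ind[OF a X aX] by (intro sum.cong refl) (auto simp: algebra_simps)
  also have "\<dots> = x a * (\<Sum>j\<in>X. x j) + (\<Sum>i<n. if i \<in> X then x i * x a else 0)"
    using a by (simp add: sum.distrib)
  also have "(\<Sum>i<n. if i \<in> X then x i * x a else 0) = (\<Sum>i\<in>{..<n} \<inter> X. x i * x a)"
    by (simp add: sum.inter_restrict)
  also have "{..<n} \<inter> X = X" using X by auto
  also have "(\<Sum>i\<in>X. x i * x a) = x a * (\<Sum>j\<in>X. x j)" by (simp add: sum_distrib_left algebra_simps)
  finally show ?thesis by simp
qed

lemma qff_reindex:
  assumes bij: "bij_betw g {..<n} {..<n}" and inv: "\<And>i. g (g i) = i"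
  shows "qff n f (\<lambda>i. x (g i)) = qff n (\<lambda>i j. f (g i) (g j)) x"
proof -
  have "qff n (\<lambda>i j. f (g i) (g j)) x = (\<Sum>i<n. \<Sum>j<n. f (g i) (g j) * x i * x j)"
    unfolding qff_def by simp
  also have "\<dots> = (\<Sum>i<n. \<Sum>j<n. f (g (g i)) (g j) * x (g i) * x j)"
    using sum.reindex_bij_betw[OF bij, of "\<lambda>i. \<Sum>j<n. f (g i) (g j) * x i * x j"] by simp
  also have "\<dots> = (\<Sum>i<n. \<Sum>j<n. f i (g j) * x (g i) * x j)" by (simp add: inv)
  also have "\<dots> = (\<Sum>i<n. \<Sum>j<n. f i (g (g j)) * x (g i) * x (g j))"
  proof (rule sum.cong[OF refl])
    fix i
    show "(\<Sum>j<n. f i (g j) * x (g i) * x j) = (\<Sum>j<n. f i (g (g j)) * x (g i) * x (g j))"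
      using sum.reindex_bij_betw[OF bij, of "\<lambda>j. f i (g j) * x (g i) * x j"] by simp
  qed
  also have "\<dots> = qff n f (\<lambda>i. x (g i))" unfolding qff_def by (simp add: inv)
  finally show ?thesis by simp
qed

lemma nsq_reindex:
  assumes bij: "bij_betw g {..<n} {..<n}"
  shows "nsq n (\<lambda>i. x (g i)) = nsq n x"
  unfolding nsq_def using sum.reindex_bij_betw[OF bij, of "\<lambda>i. (x i)^2"] by simp

lemma ent_dm: "i < n \<Longrightarrow> j < n \<Longrightarrow> ent (distance_matrix n E) i j = real (gdist E i j)"
  unfolding ent_def distance_matrix_def by simp

lemma dm_carrier: "distance_matrix n E \<in> carrier_mat n n"
  unfolding distance_matrix_def by simp

lemma dm_sym: "symf n (ent (distance_matrix n E))"
  unfolding symf_def using ent_dm gdist_sym by metis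

lemma abs_mult_le: "(a::real) \<ge> 0 \<Longrightarrow> a * b * c \<le> a * \<bar>b\<bar> * \<bar>c\<bar>"
proof -
  assume a: "a \<ge> 0"
  have "b * c \<le> \<bar>b\<bar> * \<bar>c\<bar>" by (metis abs_ge_self abs_mult)
  then have "a * (b * c) \<le> a * (\<bar>b\<bar> * \<bar>c\<bar>)" using a by (rule mult_left_mono)
  then show ?thesis by (simp add: mult.assoc)
qed

lemma UV_gen: "a \<noteq> b \<Longrightarrow> a \<notin> X \<Longrightarrow> b \<notin> X \<Longrightarrow>
  \<not> (((i = a \<and> j \<in> X) \<or> (j = a \<and> i \<in> X)) \<and> ((i = b \<and> j \<in> X) \<or> (j = b \<and> i \<in> X)))"
  by blast

lemma ind_diag: "a \<notin> X \<Longrightarrow> ind a X i i = 0"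
  unfolding ind_def by auto

context gsetup
begin

definition NN :: "nat set set \<Rightarrow> nat \<Rightarrow> nat \<Rightarrow> real" where
  "NN E i j = (if i = j then 0 else if {i, j} \<in> E then 2 else 1)"

lemma uS: "u \<notin> S" using S_off u_in by blast
lemma vS: "v \<notin> S" using S_off v_in by blast
lemma uR: "u \<notin> R" using R_off u_in by blast
lemma vR: "v \<notin> R" using R_off v_in by blast

lemma SinT: "s \<in> S \<Longrightarrow> {v, s} \<in> T" by (simp add: in_nbrs)
lemma RinT: "r \<in> R \<Longrightarrow> {u, r} \<in> T" by (simp add: in_nbrs)

lemma SnotT: "s \<in> S \<Longrightarrow> {u, s} \<notin> T"
proof
  assume s: "s \<in> S" and e: "{u, s} \<in> T"
  have "padj 0 s \<or> (0 = 0 \<and> s \<in> R) \<or> (0 = k \<and> s \<in> S)" using adjT[of 0 s] e by simp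
  then show False using padj_off[OF S_off[OF s]] RS[of s] s k1 by auto
qed

lemma RnotT: "r \<in> R \<Longrightarrow> {v, r} \<notin> T"
proof
  assume r: "r \<in> R" and e: "{v, r} \<in> T"
  have "padj k r \<or> (k = 0 \<and> r \<in> R) \<or> (k = k \<and> r \<in> S)" using adjT[of k r] e by simp
  then show False using padj_off[OF R_off[OF r]] RS[OF r] k1 by auto
qed

lemma N1_eq: "NN T1 i j = NN T i j + ind u S i j - ind v S i j"
proof (cases "i = j")
  case True then show ?thesis unfolding NN_def using ind_diag[OF uS] ind_diag[OF vS] True by simp
next
  case False
  have m0: "{i, j} \<in> T1 \<longleftrightarrow> ({i, j} \<in> T \<and> {i, j} \<notin> {{v, x} |x. x \<in> S}) \<or> {i, j} \<in> {{u, x} |x. x \<in> S}"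
    by (simp only: Un_iff Diff_iff[of "{i, j}" T])
  have m: "{i, j} \<in> T1 \<longleftrightarrow> ({i, j} \<in> T \<and> \<not> ((i = v \<and> j \<in> S) \<or> (j = v \<and> i \<in> S))) \<or> (i = u \<and> j \<in> S) \<or> (j = u \<and> i \<in> S)"
    using m0 unfolding memD[of i j v S] memD[of i j u S] .
  have a1: "i = v \<and> j \<in> S \<Longrightarrow> {i, j} \<in> T" using SinT by blast
  have a2: "j = v \<and> i \<in> S \<Longrightarrow> {i, j} \<in> T" using SinT edge_sym by blast
  have a3: "i = u \<and> j \<in> S \<Longrightarrow> {i, j} \<notin> T" using SnotT by blast
  have a4: "j = u \<and> i \<in> S \<Longrightarrow> {i, j} \<notin> T" using SnotT edge_sym by blast
  define V where "V = ((i = v \<and> j \<in> S) \<or> (j = v \<and> i \<in> S))"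
  define U where "U = ((i = u \<and> j \<in> S) \<or> (j = u \<and> i \<in> S))"
  have iU: "ind u S i j = (if U then 1 else 0)" unfolding ind_def U_def by simp
  have iV: "ind v S i j = (if V then 1 else 0)" unfolding ind_def V_def by simp
  have m': "{i, j} \<in> T1 \<longleftrightarrow> ({i, j} \<in> T \<and> \<not> V) \<or> U" using m unfolding U_def V_def by blast
  have VT: "V \<Longrightarrow> {i, j} \<in> T" using a1 a2 unfolding V_def by blast
  have UT: "U \<Longrightarrow> {i, j} \<notin> T" using a3 a4 unfolding U_def by blast
  have UV: "\<not> (U \<and> V)" unfolding U_def V_def by (rule UV_gen[OF uv uS vS])
  have N1: "NN T1 i j = (if {i, j} \<in> T1 then 2 else 1)" unfolding NN_def using False by simp
  have N0: "NN T i j = (if {i, j} \<in> T then 2 else 1)" unfolding NN_def using False by simp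
  show ?thesis
  proof (cases V)
    case True
    then show ?thesis unfolding N1 N0 iU iV using m' VT UV by simp
  next
    case nV: False
    show ?thesis
    proof (cases U)
      case True
      then show ?thesis unfolding N1 N0 iU iV using m' UT nV by simp
    next
      case False
      then show ?thesis unfolding N1 N0 iU iV using m' nV by simp
    qed
  qed
qed

lemma Nr_eq: "NN Tr i j = NN T i j + ind v R i j - ind u R i j"
proof (cases "i = j")
  case True then show ?thesis unfolding NN_def using ind_diag[OF uR] ind_diag[OF vR] True by simp
next
  case False
  have m0: "{i, j} \<in> Tr \<longleftrightarrow> ({i, j} \<in> T \<and> {i, j} \<notin> {{u, x} |x. x \<in> R}) \<or> {i, j} \<in> {{v, x} |x. x \<in> R}"
    by (simp only: Un_iff Diff_iff[of "{i, j}" T])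
  have m: "{i, j} \<in> Tr \<longleftrightarrow> ({i, j} \<in> T \<and> \<not> ((i = u \<and> j \<in> R) \<or> (j = u \<and> i \<in> R))) \<or> (i = v \<and> j \<in> R) \<or> (j = v \<and> i \<in> R)"
    using m0 unfolding memD[of i j u R] memD[of i j v R] .
  have a1: "i = u \<and> j \<in> R \<Longrightarrow> {i, j} \<in> T" using RinT by blast
  have a2: "j = u \<and> i \<in> R \<Longrightarrow> {i, j} \<in> T" using RinT edge_sym by blast
  have a3: "i = v \<and> j \<in> R \<Longrightarrow> {i, j} \<notin> T" using RnotT by blast
  have a4: "j = v \<and> i \<in> R \<Longrightarrow> {i, j} \<notin> T" using RnotT edge_sym by blast
  define V where "V = ((i = u \<and> j \<in> R) \<or> (j = u \<and> i \<in> R))"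
  define U where "U = ((i = v \<and> j \<in> R) \<or> (j = v \<and> i \<in> R))"
  have iU: "ind v R i j = (if U then 1 else 0)" unfolding ind_def U_def by simp
  have iV: "ind u R i j = (if V then 1 else 0)" unfolding ind_def V_def by simp
  have m': "{i, j} \<in> Tr \<longleftrightarrow> ({i, j} \<in> T \<and> \<not> V) \<or> U" using m unfolding U_def V_def by blast
  have VT: "V \<Longrightarrow> {i, j} \<in> T" using a1 a2 unfolding V_def by blast
  have UT: "U \<Longrightarrow> {i, j} \<notin> T" using a3 a4 unfolding U_def by blast
  have UV: "\<not> (U \<and> V)" unfolding U_def V_def using UV_gen[OF uv uR vR] by blast
  have N1: "NN Tr i j = (if {i, j} \<in> Tr then 2 else 1)" unfolding NN_def using False by simp
  have N0: "NN T i j = (if {i, j} \<in> T then 2 else 1)" unfolding NN_def using False by simp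
  show ?thesis
  proof (cases V)
    case True
    then show ?thesis unfolding N1 N0 iU iV using m' VT UV by simp
  next
    case nV: False
    show ?thesis
    proof (cases U)
      case True
      then show ?thesis unfolding N1 N0 iU iV using m' UT nV by simp
    next
      case False
      then show ?thesis unfolding N1 N0 iU iV using m' nV by simp
    qed
  qed
qed

lemma Nsig: "NN T1 (sig i) (sig j) = NN Tr i j"
proof -
  have "sig i = sig j \<longleftrightarrow> i = j" by (metis sig_sig)
  then show ?thesis unfolding NN_def using iso by simp
qed

lemma S_sub: "S \<subseteq> {..<n}" using ltn SinT by blast
lemma R_sub: "R \<subseteq> {..<n}" using ltn RinT by blast
lemma u_lt: "u < n" using p_lt[of 0] by simp
lemma v_lt: "v < n" using p_lt[of k] by simp

lemma kne0: "k \<noteq> 0" using k1 by simp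

lemma vT1: "{v, z} \<in> T1 \<Longrightarrow> z = w"
proof -
  assume h: "{v, z} \<in> T1"
  have "padj k z \<or> (k = 0 \<and> (z \<in> R \<or> z \<in> S))" using adjT1[OF order_refl, of z] h by blast
  then have "padj k z" using kne0 by blast
  then obtain b where "b \<le> k" "z = p ! b" "b = k + 1 \<or> k = b + 1" unfolding padj_def by blast
  then show ?thesis by auto
qed

lemma b_exists:
  assumes x0: "x0 < n" "y0 < n" "gdist T x0 y0 \<ge> 4"
  shows "\<exists>b<n. b \<noteq> v \<and> {v, b} \<notin> T1 \<and> (\<forall>z<n. z \<noteq> v \<longrightarrow> z \<noteq> b \<longrightarrow> {v, z} \<notin> T1 \<or> {b, z} \<notin> T1)"
proof -
  define TT where "TT = T1"
  have A: "z = w" if "{v, z} \<in> TT" for z using vT1 that unfolding TT_def by blast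
  have adj: "{p ! a, y} \<in> TT \<longleftrightarrow> padj a y \<or> (a = 0 \<and> (y \<in> R \<or> y \<in> S))" if "a \<le> k" for a y
    unfolding TT_def by (rule adjT1[OF that])
  have "\<exists>b<n. b \<noteq> v \<and> {v, b} \<notin> TT \<and> {b, w} \<notin> TT"
  proof (cases "k \<ge> 2")
    case True
    obtain s where s: "s \<in> S" using S_ne by blast
    have sn: "s < n" using S_sub s by blast
    have soff: "s \<notin> set p" using S_off[OF s] .
    have np: "\<not> padj a s" for a using padj_off[OF soff] .
    have sv: "s \<noteq> v" using soff v_in by metis
    have vs: "{v, s} \<notin> TT" using adj[OF order_refl, of s] np kne0 by blast
    have k10: "k - 1 \<noteq> 0" using True by simp
    have "{w, s} \<notin> TT" using adj[OF diff_le_self, of 1 s] np k10 by blast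
    then have sw: "{s, w} \<notin> TT" by (metis insert_commute)
    show ?thesis using sn sv vs sw by blast
  next
    case False
    then have k1': "k = 1" using k1 by simp
    have e: "{u, v} \<in> T" using pedge[of 0] k1' by simp
    obtain z where z: "z < n" "z \<noteq> u" "z \<noteq> v" "{u, z} \<notin> T" "{v, z} \<notin> T"
      using far_from_edge[OF x0 e] by blast
    have npz: "\<not> padj a z" for a
    proof
      assume "padj a z"
      then obtain b where "b \<le> k" "z = p ! b" unfolding padj_def by blast
      then show False using z k1' by (cases b) auto
    qed
    have vz: "{v, z} \<notin> TT" using adj[OF order_refl, of z] npz kne0 by blast
    have zR: "z \<notin> R" using z(4) in_nbrs by blast
    have zS: "z \<notin> S" using z(5) in_nbrs by blast
    have uz: "{u, z} \<notin> TT" using adj[OF le0, of z] npz zR zS by blast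
    have wu: "w = u" using k1' by simp
    have zw: "{z, w} \<notin> TT" using uz wu by (metis insert_commute)
    show ?thesis using z(1,3) vz zw by blast
  qed
  then obtain b where b: "b < n" "b \<noteq> v" "{v, b} \<notin> TT" "{b, w} \<notin> TT" by blast
  have "\<forall>z<n. z \<noteq> v \<longrightarrow> z \<noteq> b \<longrightarrow> {v, z} \<notin> TT \<or> {b, z} \<notin> TT"
  proof (intro allI impI)
    fix z assume "z < n" "z \<noteq> v" "z \<noteq> b"
    show "{v, z} \<notin> TT \<or> {b, z} \<notin> TT"
    proof (cases "{v, z} \<in> TT")
      case True
      then have "z = w" by (rule A)
      then show ?thesis using b(4) by simp
    qed simp
  qed
  then have "\<exists>b<n. b \<noteq> v \<and> {v, b} \<notin> TT \<and> (\<forall>z<n. z \<noteq> v \<longrightarrow> z \<noteq> b \<longrightarrow> {v, z} \<notin> TT \<or> {b, z} \<notin> TT)"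
    using b(1-3) by blast
  then show ?thesis unfolding TT_def .
qed

end

context gsetup
begin

lemma main_ineq:
  assumes x0: "x0 < n" "y0 < n" "gdist T x0 y0 \<ge> 4"
  shows "Max {k. eigenvalue (distance_matrix n (complement n T)) k}
       < Max {k. eigenvalue (distance_matrix n (complement n T1)) k}"
proof -
  define TT where "TT = T1"
  define TR where "TR = Tr"
  have N1_eq': "NN TT i j = NN T i j + ind u S i j - ind v S i j" for i j
    unfolding TT_def by (rule N1_eq)
  have Nsig': "NN TT (sig i) (sig j) = NN T i j + ind v R i j - ind u R i j" for i j
    unfolding TT_def using Nsig Nr_eq by simp
  have b_ex': "\<exists>b<n. b \<noteq> v \<and> {v, b} \<notin> TT \<and> (\<forall>z<n. z \<noteq> v \<longrightarrow> z \<noteq> b \<longrightarrow> {v, z} \<notin> TT \<or> {b, z} \<notin> TT)"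
    unfolding TT_def by (rule b_exists[OF x0])
  define D0 where "D0 = distance_matrix n (complement n T)"
  define D1 where "D1 = distance_matrix n (complement n TT)"
  define l0 where "l0 = Max {k. eigenvalue D0 k}"
  define l1 where "l1 = Max {k. eigenvalue D1 k}"
  have n0: "n > 0" using u_lt by simp
  have E0: "\<forall>i<n. \<forall>j<n. ent D0 i j = NN T i j"
  proof (intro allI impI)
    fix i j assume i: "i < n" and j: "j < n"
    show "ent D0 i j = NN T i j"
    proof (cases "i = j")
      case True then show ?thesis unfolding D0_def NN_def using ent_dm[OF i j] gdist_self by simp
    next
      case ij: False
      show ?thesis
      proof (cases "{i, j} \<in> T")
        case False
        have "{i, j} \<in> complement n T" by (rule compl_edge[OF i j ij False])
        then show ?thesis unfolding D0_def NN_def using ent_dm[OF i j] gdist_edge ij False by simp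
      next
        case True
        obtain z where z: "z < n" "z \<noteq> i" "z \<noteq> j" "{i, z} \<notin> T" "{j, z} \<notin> T"
          using far_from_edge[OF x0 True] by blast
        have "{i, z} \<in> complement n T" using compl_edge[OF i z(1)] z by simp
        moreover have "{z, j} \<in> complement n T" using compl_edge[OF z(1) j] z by (simp add: insert_commute)
        ultimately have w: "walk (complement n T) [i, z, j]" by simp
        have "gdist (complement n T) i j \<le> length [i, z, j] - 1" by (rule gdist_le[OF w]) simp_all
        then have "gdist (complement n T) i j \<le> 2" by simp
        moreover have "real (gdist (complement n T) i j) \<ge> 2"
          using gdist_compl_lb[OF w _ _ ij] True by simp
        ultimately have "gdist (complement n T) i j = 2" by simp
        then show ?thesis unfolding D0_def NN_def using ent_dm[OF i j] ij True by simp
      qed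
    qed
  qed
  have E1: "\<forall>i<n. \<forall>j<n. ent D1 i j \<ge> NN TT i j"
  proof (intro allI impI)
    fix i j assume i: "i < n" and j: "j < n"
    show "ent D1 i j \<ge> NN TT i j"
    proof (cases "i = j")
      case True then show ?thesis unfolding D1_def NN_def using ent_dm[OF i j] by simp
    next
      case ij: False
      obtain b where b: "b < n" "b \<noteq> v" "{v, b} \<notin> TT"
        "\<forall>z<n. z \<noteq> v \<longrightarrow> z \<noteq> b \<longrightarrow> {v, z} \<notin> TT \<or> {b, z} \<notin> TT"
        using b_ex' by blast
      obtain xs where xs: "walk (complement n TT) xs" "hd xs = i" "last xs = j"
        using compl_walk[OF v_lt b(1) b(2)[symmetric] b(3) b(4) i j] by blast
      show ?thesis unfolding D1_def NN_def using ent_dm[OF i j] gdist_compl_lb[OF xs ij] ij by simp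
    qed
  qed
  have D0c: "D0 \<in> carrier_mat n n" unfolding D0_def by (rule dm_carrier)
  have D1c: "D1 \<in> carrier_mat n n" unfolding D1_def by (rule dm_carrier)
  have D0s: "symf n (ent D0)" unfolding D0_def by (rule dm_sym)
  have D1s: "symf n (ent D1)" unfolding D1_def by (rule dm_sym)
  obtain z0 where z0: "nsq n z0 = 1" and z0max: "\<And>x. nsq n x = 1 \<Longrightarrow> qff n (ent D0) x \<le> qff n (ent D0) z0"
    and z0l: "qff n (ent D0) z0 = l0"
    using spec_char[OF D0c n0 D0s] unfolding l0_def by blast
  obtain z1 where z1max: "\<And>x. nsq n x = 1 \<Longrightarrow> qff n (ent D1) x \<le> qff n (ent D1) z1"
    and z1l: "qff n (ent D1) z1 = l1"
    using spec_char[OF D1c n0 D1s] unfolding l1_def by blast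
  have l1max: "\<And>x. nsq n x = 1 \<Longrightarrow> qff n (ent D1) x \<le> l1" using z1max z1l by metis
  define x where "x = (\<lambda>i. \<bar>z0 i\<bar>)"
  have xnn: "\<forall>i<n. x i \<ge> 0" unfolding x_def by simp
  have nx: "nsq n x = 1" using z0 unfolding nsq_def x_def by simp
  have "qff n (ent D0) z0 \<le> qff n (ent D0) x"
    unfolding qff_def x_def
  proof (intro sum_mono)
    fix i j assume i: "i \<in> {..<n}" and j: "j \<in> {..<n}"
    have "ent D0 i j \<ge> 0" using i j unfolding D0_def by (simp add: ent_dm)
    then show "ent D0 i j * z0 i * z0 j \<le> ent D0 i j * \<bar>z0 i\<bar> * \<bar>z0 j\<bar>" by (rule abs_mult_le)
  qed
  then have qx: "qff n (ent D0) x = l0" using z0max[OF nx] z0l by simp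
  have xmax: "\<And>y. nsq n y = 1 \<Longrightarrow> qff n (ent D0) y \<le> qff n (ent D0) x"
    using z0max qx z0l by simp
  have eig0: "\<And>i. i < n \<Longrightarrow> (\<Sum>j<n. ent D0 i j * x j) = l0 * x i"
    using maximizer_eigen[OF D0s nx xmax] qx by simp
  have xpos: "\<forall>i<n. x i > 0"
  proof (intro allI impI)
    fix i assume i: "i < n"
    show "x i > 0"
    proof (rule ccontr)
      assume "\<not> x i > 0"
      then have xi: "x i = 0" using xnn i by force
      have "(\<Sum>j<n. ent D0 i j * x j) = 0" using eig0[OF i] xi by simp
      moreover have "\<forall>j\<in>{..<n}. ent D0 i j * x j \<ge> 0"
        using E0 i xnn unfolding NN_def by auto
      ultimately have "\<forall>j\<in>{..<n}. ent D0 i j * x j = 0"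
        using sum_nonneg_eq_0_iff[of "{..<n}" "\<lambda>j. ent D0 i j * x j"] by simp
      then have "\<forall>j<n. x j = 0" using E0 i xi unfolding NN_def
        by (metis lessThan_iff mult_eq_0_iff zero_neq_numeral zero_neq_one)
      then have "nsq n x = 0" unfolding nsq_def by simp
      then show False using nx by simp
    qed
  qed
  have l0N: "l0 = qff n (NN T) x" using qx qff_cong[OF E0] by simp
  have sumS: "(\<Sum>j\<in>S. x j) > 0"
    using S_ne S_sub xpos finite_subset[OF S_sub] by (intro sum_pos) auto
  have sumR: "(\<Sum>j\<in>R. x j) > 0"
    using R_ne R_sub xpos finite_subset[OF R_sub] by (intro sum_pos) auto
  have "l0 < l1"
  proof (cases "x v \<le> x u")
    case True
    have qN1: "qff n (NN TT) x = l0 + 2 * x u * (\<Sum>j\<in>S. x j) - 2 * x v * (\<Sum>j\<in>S. x j)"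
    proof -
      have "qff n (NN TT) x = qff n (\<lambda>i j. NN T i j + ind u S i j - ind v S i j) x"
        by (rule qff_cong) (simp add: N1_eq')
      also have "\<dots> = l0 + 2 * x u * (\<Sum>j\<in>S. x j) - 2 * x v * (\<Sum>j\<in>S. x j)"
        unfolding qff_lin qff_ind[OF u_lt S_sub uS] qff_ind[OF v_lt S_sub vS] l0N ..
      finally show ?thesis .
    qed
    have "qff n (NN TT) x \<ge> l0"
      unfolding qN1 using True sumS by (simp add: algebra_simps mult_right_mono)
    moreover have "qff n (ent D1) x \<ge> qff n (NN TT) x" by (rule qff_mono[OF xnn E1])
    ultimately have q1: "qff n (ent D1) x \<ge> l0" by simp
    show ?thesis
    proof (rule ccontr)
      assume "\<not> l0 < l1"
      then have le: "l1 \<le> l0" by simp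
      have "qff n (ent D1) x \<le> l1" by (rule l1max[OF nx])
      then have eqs: "qff n (ent D1) x = l0" "l1 = l0" using q1 le by auto
      have x1max: "\<And>y. nsq n y = 1 \<Longrightarrow> qff n (ent D1) y \<le> qff n (ent D1) x"
        using l1max eqs by simp
      have e1: "(\<Sum>j<n. ent D1 u j * x j) = l0 * x u"
        using maximizer_eigen[OF D1s nx x1max u_lt] eqs by simp
      have "(\<Sum>j<n. ent D1 u j * x j) \<ge> (\<Sum>j<n. NN TT u j * x j)"
        using E1 u_lt xnn by (intro sum_mono mult_right_mono) auto
      also have "(\<Sum>j<n. NN TT u j * x j) = (\<Sum>j<n. NN T u j * x j) + (\<Sum>j<n. ind u S u j * x j) - (\<Sum>j<n. ind v S u j * x j)"
        unfolding N1_eq' by (simp add: sum.distrib sum_subtractf algebra_simps)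
      also have "(\<Sum>j<n. ind u S u j * x j) = (\<Sum>j\<in>S. x j)"
        unfolding row_ind[OF u_lt S_sub uS, of u x] if_not_P[OF uS] by simp
      also have "(\<Sum>j<n. ind v S u j * x j) = 0"
        unfolding row_ind[OF v_lt S_sub vS, of u x] if_not_P[OF uS] if_not_P[OF uv] by simp
      also have "(\<Sum>j<n. NN T u j * x j) = l0 * x u"
        using eig0[OF u_lt] E0 u_lt by (metis (no_types, lifting) lessThan_iff sum.cong)
      finally have "l0 * x u + (\<Sum>j\<in>S. x j) \<le> l0 * x u" using e1 by simp
      then show False using sumS by simp
    qed
  next
    case False
    define y where "y = (\<lambda>i. x (sig i))"
    have ny: "nsq n y = 1" unfolding y_def using nsq_reindex[OF sig_bij] nx by simp
    have ynn: "\<forall>i<n. y i \<ge> 0" unfolding y_def using xnn sig_lt by simp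
    have "qff n (NN TT) y = qff n (\<lambda>i j. NN TT (sig i) (sig j)) x"
      unfolding y_def by (rule qff_reindex[OF sig_bij sig_sig])
    also have "\<dots> = qff n (\<lambda>i j. NN T i j + ind v R i j - ind u R i j) x"
      by (rule qff_cong) (simp add: Nsig')
    also have "\<dots> = l0 + 2 * x v * (\<Sum>j\<in>R. x j) - 2 * x u * (\<Sum>j\<in>R. x j)"
      unfolding qff_lin qff_ind[OF u_lt R_sub uR] qff_ind[OF v_lt R_sub vR] l0N ..
    finally have qy: "qff n (NN TT) y = l0 + 2 * (x v - x u) * (\<Sum>j\<in>R. x j)"
      by (simp add: algebra_simps)
    have "2 * (x v - x u) * (\<Sum>j\<in>R. x j) > 0" using False sumR by simp
    then have "qff n (NN TT) y > l0" using qy by simp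
    moreover have "qff n (ent D1) y \<ge> qff n (NN TT) y" by (rule qff_mono[OF ynn E1])
    moreover have "qff n (ent D1) y \<le> l1" by (rule l1max[OF ny])
    ultimately show ?thesis by simp
  qed
  then show ?thesis unfolding l0_def l1_def D0_def D1_def TT_def .
qed

end

theorem mainTheorem1:
  fixes n :: nat and T T1 :: "nat set set" and u v :: nat
  assumes "is_tree n T"
    and "diam n T \<ge> 4"
    and "proper_gts n T u v T1"
  shows "dist_spectral_radius n (complement n T1) > dist_spectral_radius n (complement n T)"
proof -
  have g: "graph n T" and ac: "\<not> has_cycle T" using assms(1) unfolding is_tree_def by auto
  have gts: "gts n T u v T1" and npu: "\<not> pendant T u" and npv: "\<not> pendant T v"
    using assms(3) unfolding proper_gts_def by auto
  from gts have un: "u < n" and vn: "v < n" and uv: "u \<noteq> v" unfolding gts_def by auto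
  from gts obtain p where pp: "path T p" and hp: "hd p = u" and lp: "last p = v"
    and int: "\<forall>i. 0 < i \<and> i < length p - 1 \<longrightarrow> deg T (p ! i) = 2"
    and T1eq: "T1 = (T - {{v, x} |x. x \<in> nbrs T v - {p ! (length p - 2)}})
                    \<union> {{u, x} |x. x \<in> nbrs T v - {p ! (length p - 2)}}"
    unfolding gts_def Let_def by blast
  have pne: "p \<noteq> []" using pp unfolding path_def walk_def by simp
  have len: "length p \<ge> 2"
  proof (rule ccontr)
    assume a2: "\<not> length p \<ge> 2"
    have "length p > 0" using pne by simp
    then have "length p = 1" using a2 by linarith
    then obtain a where "p = [a]" by (metis length_0_conv length_Suc_conv One_nat_def)
    then show False using hp lp uv by simp
  qed
  have p0: "p ! 0 = u" using hp pne by (simp add: hd_conv_nth)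
  have pk: "p ! (length p - 1) = v" using lp pne by (simp add: last_conv_nth)
  have gs: "gsetup n T p"
    unfolding gsetup_def using g ac pp len int npu npv p0 pk by simp
  have n0: "n > 0" using un by simp
  obtain x0 y0 where xy: "x0 < n" "y0 < n" "gdist T x0 y0 \<ge> 4"
    using diam_wit[OF n0 assms(2)] by blast
  have "length p - 2 = length p - 1 - 1" by simp
  then have T1eq': "T1 = (T - {{p ! (length p - 1), x} |x. x \<in> nbrs T (p ! (length p - 1)) - {p ! (length p - 1 - 1)}})
                    \<union> {{p ! 0, x} |x. x \<in> nbrs T (p ! (length p - 1)) - {p ! (length p - 1 - 1)}}"
    using T1eq p0 pk by simp
  have "Max {k. eigenvalue (distance_matrix n (complement n T)) k}
       < Max {k. eigenvalue (distance_matrix n (complement n T1)) k}"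
    unfolding T1eq' by (rule gsetup.main_ineq[OF gs xy])
  then show ?thesis unfolding dist_spectral_radius_def .
qed

end
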